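(* Let $\mathcal H$ be a separable Hilbert space and let $\Phi:B(\mathcal H)\to B(\mathcal H)$ be a quantum channel with Kraus representation $\Phi(A)=\sum_{k\ge1}V_k^*AV_k$, where $V_k\in B(\mathcal H)$ and $\sum_k V_k^*V_k=I$. Then the fixed point space $\mathcal F(\Phi)=\{A\in B(\mathcal H):\Phi(A)=A\}$ is a von Neumann algebra if and only if $\mathcal F(\Phi)\subseteq\mathcal N(\Phi)$. In this case, \[ \mathcal F(\Phi)=\{V_j,V_j^*:\ j=1,2,\dots\}', \] where $'$ denotes the commutant.
   Context: A quantum channel is a unital normal completely positive map $\Phi:B(\mathcal H)\to B(\mathcal H)$. The multiplicative domain of a channel $\Psi$ is $\mathcal M(\Psi)=\{A\in B(\mathcal H): \Psi(A^*A)=\Psi(A)^*\Psi(A),\ \Psi(AA^* )=\Psi(A)\Psi(A)^*\}$, and the decoherence free algebra is $\mathcal N(\Phi)=\bigcap_{n\ge1}\mathcal M(\Phi^n)$. *)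

theory Defs
  imports "HOL-Analysis.Analysis"
begin

class complex_inner = real_normed_vector +
  fixes scaleC :: "complex \<Rightarrow> 'a \<Rightarrow> 'a"
    and cinner :: "'a \<Rightarrow> 'a \<Rightarrow> complex"
  assumes scaleC_add_right: "scaleC a (x + y) = scaleC a x + scaleC a y"
    and scaleC_add_left: "scaleC (a + b) x = scaleC a x + scaleC b x"
    and scaleC_scaleC: "scaleC a (scaleC b x) = scaleC (a * b) x"
    and scaleC_one: "scaleC 1 x = x"
    and scaleC_of_real: "scaleC (complex_of_real r) x = scaleR r x"
    and cinner_commute: "cinner x y = cnj (cinner y x)"
    and cinner_add_left: "cinner (x + y) z = cinner x z + cinner y z"
    and cinner_scaleC_left: "cinner (scaleC a x) y = cnj a * cinner x y"
    and cinner_self_norm: "cinner x x = complex_of_real ((norm x)\<^sup>2)"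

class chilbert_space = complex_inner + complete_space

definition bop :: "('a::complex_inner \<Rightarrow> 'a) \<Rightarrow> bool" where
  "bop A \<longleftrightarrow> (\<forall>x y. A (x + y) = A x + A y) \<and> (\<forall>c x. A (scaleC c x) = scaleC c (A x))
            \<and> (\<exists>K. \<forall>x. norm (A x) \<le> K * norm x)"

definition BH :: "('a::complex_inner \<Rightarrow> 'a) set" where
  "BH = {A. bop A}"

text \<open>Adjoint: the (unique, by Riesz) operator with <A x, y> = <x, A* y>.\<close>
definition adj :: "('a::complex_inner \<Rightarrow> 'a) \<Rightarrow> ('a \<Rightarrow> 'a)" where
  "adj A = (SOME B. \<forall>x y. cinner (A x) y = cinner x (B y))"

definition op_add :: "('a::complex_inner \<Rightarrow> 'a) \<Rightarrow> ('a \<Rightarrow> 'a) \<Rightarrow> ('a \<Rightarrow> 'a)" where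
  "op_add A B = (\<lambda>x. A x + B x)"

definition op_scale :: "complex \<Rightarrow> ('a::complex_inner \<Rightarrow> 'a) \<Rightarrow> ('a \<Rightarrow> 'a)" where
  "op_scale c A = (\<lambda>x. scaleC c (A x))"

text \<open>Operator product is composition: (A B) x = A (B x).\<close>

definition commutant :: "('a::complex_inner \<Rightarrow> 'a) set \<Rightarrow> ('a \<Rightarrow> 'a) set" where
  "commutant S = {A \<in> BH. \<forall>B\<in>S. A \<circ> B = B \<circ> A}"

text \<open>Closedness in the weak operator topology, via its basic neighbourhoods.\<close>
definition wot_closed :: "('a::complex_inner \<Rightarrow> 'a) set \<Rightarrow> bool" where
  "wot_closed M \<longleftrightarrow> (\<forall>A\<in>BH.
     (\<forall>(xs :: ('a \<times> 'a) list) (e::real). e > 0 \<longrightarrow>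
        (\<exists>B\<in>M. \<forall>(x, y)\<in>set xs. cmod (cinner y (A x) - cinner y (B x)) < e))
     \<longrightarrow> A \<in> M)"

definition von_neumann_algebra :: "('a::complex_inner \<Rightarrow> 'a) set \<Rightarrow> bool" where
  "von_neumann_algebra M \<longleftrightarrow> M \<subseteq> BH \<and> id \<in> M
     \<and> (\<forall>A\<in>M. \<forall>B\<in>M. op_add A B \<in> M \<and> A \<circ> B \<in> M)
     \<and> (\<forall>c. \<forall>A\<in>M. op_scale c A \<in> M)
     \<and> (\<forall>A\<in>M. adj A \<in> M)
     \<and> wot_closed M"

text \<open>The channel with (countable) Kraus family V_1, V_2, ... (indexed here by nat from 0;
finite families are obtained by taking V k = 0 for large k):
Phi(A) x = sum_k V_k* A V_k x, the series converging in the strong operator topology.\<close>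
definition kraus_channel :: "(nat \<Rightarrow> ('a::complex_inner \<Rightarrow> 'a)) \<Rightarrow> ('a \<Rightarrow> 'a) \<Rightarrow> ('a \<Rightarrow> 'a)" where
  "kraus_channel V A = (\<lambda>x. lim (\<lambda>n. \<Sum>k<n. adj (V k) (A (V k x))))"

definition mult_domain :: "(('a::complex_inner \<Rightarrow> 'a) \<Rightarrow> ('a \<Rightarrow> 'a)) \<Rightarrow> ('a \<Rightarrow> 'a) set" where
  "mult_domain Psi = {A \<in> BH. Psi (adj A \<circ> A) = adj (Psi A) \<circ> Psi A
                             \<and> Psi (A \<circ> adj A) = Psi A \<circ> adj (Psi A)}"

definition decoherence_free :: "(('a::complex_inner \<Rightarrow> 'a) \<Rightarrow> ('a \<Rightarrow> 'a)) \<Rightarrow> ('a \<Rightarrow> 'a) set" where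
  "decoherence_free Phi = (\<Inter>n\<in>{1..}. mult_domain (Phi ^^ n))"

definition fixed_points :: "(('a::complex_inner \<Rightarrow> 'a) \<Rightarrow> ('a \<Rightarrow> 'a)) \<Rightarrow> ('a \<Rightarrow> 'a) set" where
  "fixed_points Phi = {A \<in> BH. Phi A = A}"

definition separable_space :: "'a::topological_space itself \<Rightarrow> bool" where
  "separable_space _ \<longleftrightarrow> (\<exists>D::'a set. countable D \<and> closure D = UNIV)"

end

theory Submission
  imports Defs
begin


lemma scaleC_zero_left[simp]: "scaleC 0 (x::'a::complex_inner) = 0"
  using scaleC_of_real[of 0 x] by simp

lemma scaleC_zero_right[simp]: "scaleC a (0::'a::complex_inner) = 0"
  using scaleC_add_right[of a 0 0] by simp

lemma scaleC_minus_right: "scaleC a (- x::'a::complex_inner) = - scaleC a x"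
  using scaleC_add_right[of a x "-x"] add.inverse_unique[of "scaleC a x" "scaleC a (-x)"] by simp

lemma scaleC_diff_right: "scaleC a (x - y::'a::complex_inner) = scaleC a x - scaleC a y"
  by (simp only: diff_conv_add_uminus scaleC_add_right scaleC_minus_right)

lemma scaleC_minus_left: "scaleC (- a) (x::'a::complex_inner) = - scaleC a x"
  using scaleC_add_left[of a "-a" x] add.inverse_unique[of "scaleC a x" "scaleC (-a) x"] by simp

lemma scaleC_diff_left: "scaleC (a - b) (x::'a::complex_inner) = scaleC a x - scaleC b x"
  by (simp only: diff_conv_add_uminus scaleC_add_left scaleC_minus_left)

lemma cinner_add_right: "cinner x (y + z::'a::complex_inner) = cinner x y + cinner x z"
proof -
  have "cinner x (y + z) = cnj (cinner (y + z) x)" by (rule cinner_commute)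
  also have "\<dots> = cnj (cinner y x) + cnj (cinner z x)" by (simp only: cinner_add_left complex_cnj_add)
  also have "\<dots> = cinner x y + cinner x z" by (simp only: cinner_commute[of x y] cinner_commute[of x z])
  finally show ?thesis .
qed

lemma cinner_scaleC_right: "cinner x (scaleC a (y::'a::complex_inner)) = a * cinner x y"
proof -
  have "cinner x (scaleC a y) = cnj (cinner (scaleC a y) x)" by (rule cinner_commute)
  also have "\<dots> = a * cnj (cinner y x)" by (simp only: cinner_scaleC_left complex_cnj_mult complex_cnj_cnj)
  also have "\<dots> = a * cinner x y" by (simp only: cinner_commute[of x y])
  finally show ?thesis .
qed

lemma cinner_zero_left[simp]: "cinner 0 (x::'a::complex_inner) = 0"
  using cinner_add_left[of 0 0 x] by simp

lemma cinner_zero_right[simp]: "cinner x (0::'a::complex_inner) = 0"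
  using cinner_add_right[of x 0 0] by simp

lemma cinner_minus_left: "cinner (- x) (y::'a::complex_inner) = - cinner x y"
  using cinner_add_left[of x "-x" y] add.inverse_unique[of "cinner x y" "cinner (-x) y"] by simp

lemma cinner_minus_right: "cinner x (- y::'a::complex_inner) = - cinner x y"
  using cinner_add_right[of x y "-y"] add.inverse_unique[of "cinner x y" "cinner x (-y)"] by simp

lemma cinner_diff_left: "cinner (x - y) (z::'a::complex_inner) = cinner x z - cinner y z"
  by (simp only: cinner_add_left cinner_minus_left diff_conv_add_uminus)

lemma cinner_diff_right: "cinner x (y - z::'a::complex_inner) = cinner x y - cinner x z"
  by (simp only: cinner_add_right cinner_minus_right diff_conv_add_uminus)

lemma cinner_scaleR_right: "cinner x (scaleR r (y::'a::complex_inner)) = complex_of_real r * cinner x y"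
  by (metis cinner_scaleC_right scaleC_of_real)

lemma cinner_scaleR_left: "cinner (scaleR r x) (y::'a::complex_inner) = complex_of_real r * cinner x y"
  by (metis cinner_scaleC_left scaleC_of_real complex_cnj_complex_of_real)

lemma cinner_sum_right: "cinner x (\<Sum>k\<in>S. f k) = (\<Sum>k\<in>S. cinner (x::'a::complex_inner) (f k))"
  by (induction S rule: infinite_finite_induct) (auto simp: cinner_add_right)

lemma cinner_sum_left: "cinner (\<Sum>k\<in>S. f k) x = (\<Sum>k\<in>S. cinner (f k) (x::'a::complex_inner))"
  by (induction S rule: infinite_finite_induct) (auto simp: cinner_add_left)

lemma cinner_self_eq_zero: "cinner x x = 0 \<longleftrightarrow> (x::'a::complex_inner) = 0"
  by (simp add: cinner_self_norm)

lemma cinner_ext: "(\<And>w. cinner w a = cinner w (b::'a::complex_inner)) \<Longrightarrow> a = b"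
  by (metis cinner_diff_right cinner_self_eq_zero eq_iff_diff_eq_0)

lemma cinner_ext_left: "(\<And>w. cinner a w = cinner (b::'a::complex_inner) w) \<Longrightarrow> a = b"
  by (metis cinner_diff_left cinner_self_eq_zero eq_iff_diff_eq_0)

lemma norm_scaleC: "norm (scaleC a (x::'a::complex_inner)) = cmod a * norm x"
proof -
  have "complex_of_real ((norm (scaleC a x))\<^sup>2) = cnj a * a * complex_of_real ((norm x)\<^sup>2)"
    by (metis cinner_scaleC_left cinner_scaleC_right cinner_self_norm mult.assoc)
  also have "\<dots> = complex_of_real ((cmod a * norm x)\<^sup>2)"
    by (metis complex_norm_square mult.commute of_real_mult power_mult_distrib)
  finally have "(norm (scaleC a x))\<^sup>2 = (cmod a * norm x)\<^sup>2" using of_real_eq_iff by blast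
  then show ?thesis by (simp add: power2_eq_iff_nonneg)
qed

lemma cinner_expand:
  "cinner (z - scaleC t m) (z - scaleC t (m::'a::complex_inner)) =
   cinner z z - t * cinner z m - cnj t * cinner m z + cnj t * t * cinner m m"
  by (simp add: cinner_diff_left cinner_diff_right cinner_scaleC_left cinner_scaleC_right algebra_simps)

lemma key_proj:
  fixes z m :: "'a::complex_inner"
  assumes "m \<noteq> 0"
  shows "(norm (z - scaleC (cinner m z / complex_of_real ((norm m)\<^sup>2)) m))\<^sup>2
        = (norm z)\<^sup>2 - (cmod (cinner m z))\<^sup>2 / (norm m)\<^sup>2"
proof -
  define a where "a = cinner m z"
  define M where "M = (norm m)\<^sup>2"
  have M0: "M \<noteq> 0" using assms by (simp add: M_def)
  have zm: "cinner z m = cnj a" by (simp add: a_def cinner_commute[of z m])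
  have "complex_of_real ((norm (z - scaleC (a / complex_of_real M) m))\<^sup>2)
     = complex_of_real ((norm z)\<^sup>2) - (a / M) * cnj a - cnj (a / M) * a + cnj (a/M) * (a/M) * M"
    by (simp only: cinner_self_norm[symmetric] cinner_expand zm a_def M_def)
  also have "\<dots> = complex_of_real ((norm z)\<^sup>2) - a * cnj a / M"
    using M0 by (simp add: field_simps)
  also have "\<dots> = complex_of_real ((norm z)\<^sup>2 - (cmod a)\<^sup>2 / M)"
    unfolding complex_norm_square[symmetric] of_real_diff of_real_divide by simp
  finally have "complex_of_real ((norm (z - scaleC (a / complex_of_real M) m))\<^sup>2) = complex_of_real ((norm z)\<^sup>2 - (cmod a)\<^sup>2 / M)" .
  then show ?thesis unfolding a_def M_def by (simp only: of_real_eq_iff)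
qed

lemma cauchy_schwarz: "cmod (cinner x y) \<le> norm x * norm (y::'a::complex_inner)"
proof (cases "x = 0")
  case True then show ?thesis by simp
next
  case False
  have "0 \<le> (norm y)\<^sup>2 - (cmod (cinner x y))\<^sup>2 / (norm x)\<^sup>2"
    unfolding key_proj[OF False, of y, symmetric] by (rule zero_le_power2)
  then have "(cmod (cinner x y))\<^sup>2 \<le> (norm x * norm y)\<^sup>2"
    using False by (simp add: field_simps power_mult_distrib)
  then show ?thesis by (simp add: power2_le_iff_abs_le)
qed

lemma bounded_linear_cinner_right: "bounded_linear (cinner (x::'a::complex_inner))"
proof (rule bounded_linear_intro[where K="norm x"])
  fix y show "norm (cinner x y) \<le> norm y * norm x" using cauchy_schwarz[of x y] by (simp add: mult.commute)
next
  fix y z show "cinner x (y + z) = cinner x y + cinner x z" by (rule cinner_add_right)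
next
  fix r y show "cinner x (r *\<^sub>R y) = r *\<^sub>R cinner x y" by (metis cinner_scaleR_right scaleR_conv_of_real)
qed

lemma bounded_linear_cinner_left: "bounded_linear (\<lambda>y. cinner y (x::'a::complex_inner))"
proof (rule bounded_linear_intro[where K="norm x"])
  fix y show "norm (cinner y x) \<le> norm y * norm x" using cauchy_schwarz[of y x] by simp
next
  fix y z show "cinner (y + z) x = cinner y x + cinner z x" by (rule cinner_add_left)
next
  fix r y show "cinner (r *\<^sub>R y) x = r *\<^sub>R cinner y x" by (metis cinner_scaleR_left scaleR_conv_of_real)
qed



lemma parallelogram:
  fixes a b :: "'a::complex_inner"
  shows "(norm (a + b))\<^sup>2 + (norm (a - b))\<^sup>2 = 2 * (norm a)\<^sup>2 + 2 * (norm b)\<^sup>2"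
proof -
  have "complex_of_real ((norm (a + b))\<^sup>2 + (norm (a - b))\<^sup>2) = cinner (a + b) (a + b) + cinner (a - b) (a - b)"
    by (simp only: of_real_add cinner_self_norm)
  also have "\<dots> = 2 * cinner a a + 2 * cinner b b"
    by (simp only: cinner_add_left cinner_add_right cinner_diff_left cinner_diff_right) (simp add: algebra_simps)
  also have "\<dots> = complex_of_real (2 * (norm a)\<^sup>2 + 2 * (norm b)\<^sup>2)"
    by (simp add: cinner_self_norm)
  finally show ?thesis by (simp only: of_real_eq_iff)
qed

lemma riesz:
  fixes f :: "'a::chilbert_space \<Rightarrow> complex"
  assumes add: "\<And>x y. f (x + y) = f x + f y"
    and scl: "\<And>c x. f (scaleC c x) = c * f x"
    and bnd: "\<And>x. cmod (f x) \<le> K * norm x"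
  shows "\<exists>w. \<forall>x. f x = cinner w x"
proof -
  have bl: "bounded_linear f"
  proof (rule bounded_linear_intro[where K=K])
    fix x y show "f (x + y) = f x + f y" by (rule add)
  next
    fix r x show "f (r *\<^sub>R x) = r *\<^sub>R f x"
      using scl[of "complex_of_real r" x] by (simp add: scaleC_of_real scaleR_conv_of_real)
  next
    fix x show "norm (f x) \<le> norm x * K" using bnd[of x] by (simp add: mult.commute)
  qed
  have f0: "f 0 = 0" using add[of 0 0] by simp
  have fdiff: "f (x - y) = f x - f y" for x y
    using add[of "x - y" y] by (simp add: algebra_simps)
  have fR: "f (scaleR r x) = complex_of_real r * f x" for r x
    using scl[of "complex_of_real r" x] by (simp add: scaleC_of_real)
  show ?thesis
  proof (cases "\<forall>x. f x = 0")
    case True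
    then show ?thesis by (intro exI[of _ 0]) simp
  next
    case False
    then obtain u0 where u0: "f u0 \<noteq> 0" by blast
    define u where "u = scaleC (inverse (f u0)) u0"
    have fu: "f u = 1" using u0 by (simp add: u_def scl)
    define N where "N = {n. f n = 0}"
    define S where "S = (\<lambda>n. (norm (u - n))\<^sup>2) ` N"
    define D where "D = Inf S"
    have Sne: "S \<noteq> {}" using f0 by (auto simp: S_def N_def)
    have Sbdd: "bdd_below S" unfolding S_def by (rule bdd_belowI[of _ 0]) auto
    have Dle: "D \<le> (norm (u - n))\<^sup>2" if "n \<in> N" for n
      unfolding D_def using Sbdd that by (auto simp: S_def intro: cInf_lower)
    have "\<exists>n\<in>N. (norm (u - n))\<^sup>2 < D + inverse (real (Suc j))" for j
    proof -
      have "Inf S < D + inverse (real (Suc j))" by (simp add: D_def)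
      then show ?thesis using cInf_less_iff[OF Sne Sbdd] by (auto simp: S_def)
    qed
    then obtain nn where nnN: "\<And>j. nn j \<in> N"
      and nnD: "\<And>j. (norm (u - nn j))\<^sup>2 < D + inverse (real (Suc j))"
      by metis
    have NR: "scaleR r n \<in> N" if "n \<in> N" for r n using that by (simp add: N_def fR)
    have Nadd: "n + m \<in> N" if "n \<in> N" "m \<in> N" for n m using that by (simp add: N_def add)
    have NC: "scaleC c n \<in> N" if "n \<in> N" for c n using that by (simp add: N_def scl)
    have cauchy_est: "(norm (nn i - nn j))\<^sup>2 \<le> 2 * inverse (real (Suc i)) + 2 * inverse (real (Suc j))" for i j
    proof -
      define a where "a = u - nn i"
      define b where "b = u - nn j"
      define m where "m = scaleR (1/2) (nn i + nn j)"
      have mN: "m \<in> N" unfolding m_def by (intro NR Nadd nnN)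
      have e1: "scaleR 2 (u - m) = scaleR 2 u - scaleR 2 m" by (rule scaleR_diff_right)
      have e2: "scaleR 2 m = nn i + nn j" by (simp add: m_def)
      have e3: "scaleR 2 u = u + u" by (rule scaleR_2)
      have e4: "a + b = (u + u) - (nn i + nn j)" by (simp add: a_def b_def algebra_simps)
      have ab: "a + b = scaleR 2 (u - m)" unfolding e1 e2 e3 e4 ..
      have "(norm (a + b))\<^sup>2 = 4 * (norm (u - m))\<^sup>2"
        unfolding ab by (simp add: power_mult_distrib)
      also have "\<dots> \<ge> 4 * D" using Dle[OF mN] by simp
      finally have 1: "4 * D \<le> (norm (a + b))\<^sup>2" .
      have "a - b = nn j - nn i" by (simp add: a_def b_def)
      then have "(norm (nn i - nn j))\<^sup>2 = (norm (a - b))\<^sup>2" by (simp add: norm_minus_commute)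
      also have "\<dots> = 2 * (norm a)\<^sup>2 + 2 * (norm b)\<^sup>2 - (norm (a + b))\<^sup>2"
        using parallelogram[of a b] by simp
      finally show ?thesis using 1 nnD[of i] nnD[of j] unfolding a_def b_def by linarith
    qed
    have "Cauchy nn"
    proof (rule metric_CauchyI)
      fix e :: real assume e: "0 < e"
      obtain M :: nat where M: "4 / e\<^sup>2 < real M" using reals_Archimedean2 by blast
      have "dist (nn i) (nn j) < e" if "i \<ge> M" "j \<ge> M" for i j
      proof -
        have "0 < 4 / e\<^sup>2" using e by simp
        then have Mpos: "0 < real M" using M by linarith
        have "inverse (real (Suc i)) \<le> inverse (real M)" using that Mpos
          by (intro le_imp_inverse_le) auto
        moreover have "inverse (real (Suc j)) \<le> inverse (real M)" using that Mpos
          by (intro le_imp_inverse_le) auto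
        ultimately have "(dist (nn i) (nn j))\<^sup>2 \<le> 4 * inverse (real M)"
          using cauchy_est[of i j] by (simp add: dist_norm)
        also have "\<dots> < e\<^sup>2" using M e Mpos by (simp add: field_simps)
        finally show ?thesis by (simp add: power2_less_imp_less e less_imp_le)
      qed
      then show "\<exists>M. \<forall>m\<ge>M. \<forall>n\<ge>M. dist (nn m) (nn n) < e" by blast
    qed
    then obtain n0 where n0: "nn \<longlonglongrightarrow> n0" using Cauchy_convergent convergent_def by blast
    have t1: "(\<lambda>j. f (nn j)) \<longlonglongrightarrow> f n0" by (rule bounded_linear.tendsto[OF bl n0])
    have t2: "(\<lambda>j. f (nn j)) = (\<lambda>j. 0)" using nnN by (simp add: N_def)
    have "(\<lambda>j. 0::complex) \<longlonglongrightarrow> f n0" using t1 unfolding t2 .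
    then have "f n0 = 0" by (simp add: LIMSEQ_const_iff)
    then have n0N: "n0 \<in> N" by (simp add: N_def)
    define z where "z = u - n0"
    have fz: "f z = 1" unfolding z_def fdiff fu \<open>f n0 = 0\<close> by simp
    have znz: "z \<noteq> 0"
    proof
      assume "z = 0" then have "f z = 0" using f0 by simp
      with fz show False by simp
    qed
    have "(norm z)\<^sup>2 \<le> D"
    proof (rule LIMSEQ_le)
      show "(\<lambda>j. (norm (u - nn j))\<^sup>2) \<longlonglongrightarrow> (norm z)\<^sup>2"
        unfolding z_def by (intro tendsto_intros n0)
      show "(\<lambda>j. D + inverse (real (Suc j))) \<longlonglongrightarrow> D"
        using tendsto_add[OF tendsto_const LIMSEQ_inverse_real_of_nat, of D] by simp
      show "\<exists>N. \<forall>n\<ge>N. (norm (u - nn n))\<^sup>2 \<le> D + inverse (real (Suc n))"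
        using nnD less_imp_le by blast
    qed
    have orth: "cinner m z = 0" if mN: "m \<in> N" for m
    proof (cases "m = 0")
      case True then show ?thesis by simp
    next
      case False
      define t where "t = cinner m z / complex_of_real ((norm m)\<^sup>2)"
      have "z - scaleC t m = u - (n0 + scaleC t m)" by (simp add: z_def algebra_simps)
      moreover have "n0 + scaleC t m \<in> N" by (intro Nadd n0N NC mN)
      ultimately have "D \<le> (norm (z - scaleC t m))\<^sup>2" using Dle by metis
      also have "\<dots> = (norm z)\<^sup>2 - (cmod (cinner m z))\<^sup>2 / (norm m)\<^sup>2"
        unfolding t_def by (rule key_proj[OF False])
      finally have "(cmod (cinner m z))\<^sup>2 / (norm m)\<^sup>2 \<le> 0" using \<open>(norm z)\<^sup>2 \<le> D\<close> by linarith
      moreover have "(norm m)\<^sup>2 > 0" using False by simp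
      ultimately have "(cmod (cinner m z))\<^sup>2 \<le> 0" by (simp add: divide_le_0_iff)
      then show ?thesis by simp
    qed
    define w where "w = scaleC (complex_of_real (inverse ((norm z)\<^sup>2))) z"
    show ?thesis
    proof (intro exI allI)
      fix x
      have "x - scaleC (f x) z \<in> N" unfolding N_def mem_Collect_eq fdiff scl fz by simp
      then have "cinner (x - scaleC (f x) z) z = 0" by (rule orth)
      then have "cinner x z - cnj (f x) * cinner z z = 0"
        by (simp only: cinner_diff_left cinner_scaleC_left)
      then have xz: "cinner x z = cnj (f x) * cinner z z" by simp
      have "cinner z x = cnj (cinner x z)" by (rule cinner_commute)
      also have "\<dots> = f x * cnj (cinner z z)" by (simp only: xz complex_cnj_mult complex_cnj_cnj)
      also have "\<dots> = f x * complex_of_real ((norm z)\<^sup>2)" by (simp only: cinner_self_norm complex_cnj_complex_of_real)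
      finally have "cinner z x = f x * complex_of_real ((norm z)\<^sup>2)" .
      then have "cinner w x = complex_of_real (inverse ((norm z)\<^sup>2)) * (f x * complex_of_real ((norm z)\<^sup>2))"
        unfolding w_def cinner_scaleC_left complex_cnj_complex_of_real by simp
      moreover have "(norm z)\<^sup>2 \<noteq> 0" using znz by simp
      ultimately show "f x = cinner w x" by (simp add: field_simps)
    qed
  qed
qed



lemma BH_iff: "A \<in> BH \<longleftrightarrow> bop A" by (simp add: BH_def)

lemma bop_add: "bop A \<Longrightarrow> A (x + y) = A x + A y" by (simp add: bop_def)
lemma bop_scaleC: "bop A \<Longrightarrow> A (scaleC c x) = scaleC c (A x)" by (simp add: bop_def)
lemma bop_bound: fixes A :: "'a::complex_inner \<Rightarrow> 'a" assumes "bop A" obtains K where "K \<ge> 0" "\<And>x. norm (A x) \<le> K * norm x"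
proof -
  obtain K where K: "\<And>x. norm (A x) \<le> K * norm x" using assms by (auto simp: bop_def)
  show ?thesis
  proof (rule that[of "max K 0"])
    fix x :: 'a have "K * norm x \<le> max K 0 * norm x" by (intro mult_right_mono) auto
    then show "norm (A x) \<le> max K 0 * norm x" using K[of x] by linarith
  qed simp
qed
lemma bop_zero: "bop A \<Longrightarrow> A 0 = 0" using bop_add[of A 0 0] by simp
lemma bop_minus: "bop A \<Longrightarrow> A (- x) = - A x"
  using bop_add[of A x "-x"] bop_zero[of A] add.inverse_unique[of "A x" "A (-x)"] by simp
lemma bop_diff: "bop A \<Longrightarrow> A (x - y) = A x - A y"
  by (simp only: diff_conv_add_uminus bop_add bop_minus)
lemma bop_sum: "bop A \<Longrightarrow> A (\<Sum>k\<in>S. f k) = (\<Sum>k\<in>S. A (f k))"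
  by (induction S rule: infinite_finite_induct) (auto simp: bop_add bop_zero)

lemma bop_id: "bop (id :: 'a::complex_inner \<Rightarrow> 'a)"
  unfolding bop_def by (auto intro: exI[of _ 1])

lemma bop_comp: assumes "bop A" "bop B" shows "bop (A \<circ> B)"
proof -
  obtain K where K: "\<And>x. norm (A x) \<le> K * norm x" "K \<ge> 0" using bop_bound[OF assms(1)] by blast
  obtain L where L: "\<And>x. norm (B x) \<le> L * norm x" "L \<ge> 0" using bop_bound[OF assms(2)] by blast
  have "norm (A (B x)) \<le> (K * L) * norm x" for x
  proof -
    have "norm (A (B x)) \<le> K * norm (B x)" by (rule K)
    also have "\<dots> \<le> K * (L * norm x)" by (intro mult_left_mono L K)
    finally show ?thesis by (simp add: mult.assoc)
  qed
  then show ?thesis using assms unfolding bop_def by auto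
qed

lemma bop_op_add: assumes "bop A" "bop B" shows "bop (op_add A B)"
proof -
  obtain K where K: "\<And>x. norm (A x) \<le> K * norm x" "K \<ge> 0" using bop_bound[OF assms(1)] by blast
  obtain L where L: "\<And>x. norm (B x) \<le> L * norm x" "L \<ge> 0" using bop_bound[OF assms(2)] by blast
  have "norm (A x + B x) \<le> (K + L) * norm x" for x
    using norm_triangle_ineq[of "A x" "B x"] K(1)[of x] L(1)[of x] by (simp add: distrib_right)
  moreover have "A (x + y) + B (x + y) = (A x + B x) + (A y + B y)" for x y
    using assms by (simp add: bop_add algebra_simps)
  moreover have "A (scaleC c x) + B (scaleC c x) = scaleC c (A x + B x)" for c x
    using assms by (simp add: bop_scaleC scaleC_add_right)
  ultimately show ?thesis unfolding bop_def op_add_def by blast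
qed

lemma bop_op_scale: assumes "bop A" shows "bop (op_scale c A)"
proof -
  obtain K where K: "\<And>x. norm (A x) \<le> K * norm x" "K \<ge> 0" using bop_bound[OF assms(1)] by blast
  have "norm (scaleC c (A x)) \<le> (cmod c * K) * norm x" for x
    using K(1)[of x] by (simp add: norm_scaleC mult.assoc mult_left_mono)
  moreover have "scaleC c (A (x + y)) = scaleC c (A x) + scaleC c (A y)" for x y
    using assms by (simp add: bop_add scaleC_add_right)
  moreover have "scaleC c (A (scaleC d x)) = scaleC d (scaleC c (A x))" for d x
    using assms by (simp add: bop_scaleC scaleC_scaleC mult.commute)
  ultimately show ?thesis unfolding bop_def op_scale_def by blast
qed

lemma adj_exists:
  fixes A :: "'a::chilbert_space \<Rightarrow> 'a"
  assumes "bop A"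
  shows "\<exists>B. \<forall>x y. cinner (A x) y = cinner x (B y)"
proof -
  obtain K where K: "\<And>x. norm (A x) \<le> K * norm x" "K \<ge> 0" using bop_bound[OF assms] by blast
  have "\<exists>w. \<forall>x. cinner (A x) y = cinner x w" for y
  proof -
    have "\<exists>w. \<forall>x. cinner y (A x) = cinner w x"
    proof (rule riesz[where K="norm y * K"])
      fix x x' show "cinner y (A (x + x')) = cinner y (A x) + cinner y (A x')"
        using assms by (simp add: bop_add cinner_add_right)
    next
      fix c x show "cinner y (A (scaleC c x)) = c * cinner y (A x)"
        using assms by (simp add: bop_scaleC cinner_scaleC_right)
    next
      fix x
      have "cmod (cinner y (A x)) \<le> norm y * norm (A x)" by (rule cauchy_schwarz)
      also have "\<dots> \<le> norm y * (K * norm x)" by (intro mult_left_mono K) simp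
      finally show "cmod (cinner y (A x)) \<le> norm y * K * norm x" by (simp add: mult.assoc)
    qed
    then obtain w where w: "\<And>x. cinner y (A x) = cinner w x" by blast
    have "cinner (A x) y = cinner x w" for x
      using w[of x] cinner_commute[of "A x" y] cinner_commute[of x w] by simp
    then show ?thesis by blast
  qed
  then show ?thesis by metis
qed

lemma adj_prop:
  fixes A :: "'a::chilbert_space \<Rightarrow> 'a"
  assumes "bop A" shows "cinner (A x) y = cinner x (adj A y)"
proof -
  have "\<forall>x y. cinner (A x) y = cinner x (adj A y)"
    unfolding adj_def by (rule someI_ex[OF adj_exists[OF assms]])
  then show ?thesis by blast
qed

lemma adj_prop':
  fixes A :: "'a::chilbert_space \<Rightarrow> 'a"
  assumes "bop A" shows "cinner (adj A y) x = cinner y (A x)"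
proof -
  have "cinner (adj A y) x = cnj (cinner x (adj A y))" by (rule cinner_commute)
  also have "\<dots> = cnj (cinner (A x) y)" by (simp only: adj_prop[OF assms])
  also have "\<dots> = cinner y (A x)" by (simp only: cinner_commute[of y "A x"] complex_cnj_cnj)
  finally show ?thesis .
qed

lemma adj_unique:
  fixes A :: "'a::chilbert_space \<Rightarrow> 'a"
  assumes "bop A" "\<And>x y. cinner (A x) y = cinner x (B y)" shows "adj A = B"
proof
  fix y show "adj A y = B y"
    by (rule cinner_ext_left) (metis adj_prop[OF assms(1)] assms(2) cinner_commute)
qed

lemma bop_adj:
  fixes A :: "'a::chilbert_space \<Rightarrow> 'a"
  assumes "bop A" shows "bop (adj A)"
proof -
  obtain K where K: "\<And>x. norm (A x) \<le> K * norm x" "K \<ge> 0" using bop_bound[OF assms] by blast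
  have add: "adj A (x + y) = adj A x + adj A y" for x y
    by (rule cinner_ext) (simp only: adj_prop[OF assms, symmetric] cinner_add_right)
  have scl: "adj A (scaleC c x) = scaleC c (adj A x)" for c x
    by (rule cinner_ext) (simp only: adj_prop[OF assms, symmetric] cinner_scaleC_right)
  have bnd: "norm (adj A y) \<le> K * norm y" for y
  proof -
    define v where "v = adj A y"
    have "cmod (cinner v v) = (norm v)\<^sup>2" unfolding cinner_self_norm norm_of_real by simp
    then have "(norm v)\<^sup>2 = cmod (cinner v v)" by simp
    also have "cinner v v = cinner (A v) y" by (simp add: v_def adj_prop[OF assms])
    also have "cmod (cinner (A v) y) \<le> norm (A v) * norm y" by (rule cauchy_schwarz)
    also have "\<dots> \<le> (K * norm v) * norm y" by (intro mult_right_mono K) simp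
    finally have *: "(norm v)\<^sup>2 \<le> K * norm v * norm y" .
    show ?thesis
    proof (cases "norm v = 0")
      case True then show ?thesis using K(2) by (simp add: v_def)
    next
      case False
      then have "norm v > 0" by simp
      with * have "norm v * norm v \<le> norm v * (K * norm y)" by (simp add: power2_eq_square algebra_simps)
      then show ?thesis using \<open>norm v > 0\<close> by (simp add: v_def)
    qed
  qed
  show ?thesis unfolding bop_def using add scl bnd by blast
qed

lemma adj_adj:
  fixes A :: "'a::chilbert_space \<Rightarrow> 'a"
  assumes "bop A" shows "adj (adj A) = A"
  by (rule adj_unique[OF bop_adj[OF assms]]) (rule adj_prop'[OF assms])



lemma sum_lessThan_split:
  fixes f :: "nat \<Rightarrow> 'b::ab_group_add"
  assumes "m \<le> n"
  shows "(\<Sum>k<n. f k) - (\<Sum>k<m. f k) = (\<Sum>k\<in>{m..<n}. f k)"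
proof -
  have "(\<Sum>k\<in>{0..<m}. f k) + (\<Sum>k\<in>{m..<n}. f k) = (\<Sum>k\<in>{0..<n}. f k)"
    by (rule sum.atLeastLessThan_concat) (use assms in auto)
  then show ?thesis by (simp add: atLeast0LessThan algebra_simps)
qed

locale kraus =
  fixes V :: "nat \<Rightarrow> ('a::chilbert_space \<Rightarrow> 'a)"
  assumes Vbop: "\<And>k. bop (V k)"
    and trace: "\<And>x. (\<lambda>n. \<Sum>k<n. adj (V k) (V k x)) \<longlonglongrightarrow> x"
begin

definition T where "T A n x = (\<Sum>k<n. adj (V k) (A (V k x)))"
definition s where "s x n = (\<Sum>k<n. (norm (V k x))\<^sup>2)"

lemma adjV: "cinner x (adj (V k) y) = cinner (V k x) y"
  by (simp only: adj_prop[OF Vbop])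

lemma adjV': "cinner (adj (V k) y) x = cinner y (V k x)"
  by (rule adj_prop'[OF Vbop])

lemma s_cinner: "complex_of_real (s x n) = cinner x (\<Sum>k<n. adj (V k) (V k x))"
  unfolding s_def cinner_sum_right of_real_sum
  by (rule sum.cong) (simp_all only: adjV cinner_self_norm)

lemma s_lim: "s x \<longlonglongrightarrow> (norm x)\<^sup>2"
proof -
  have "(\<lambda>n. cinner x (\<Sum>k<n. adj (V k) (V k x))) \<longlonglongrightarrow> cinner x x"
    by (rule bounded_linear.tendsto[OF bounded_linear_cinner_right trace])
  then have "(\<lambda>n. complex_of_real (s x n)) \<longlonglongrightarrow> complex_of_real ((norm x)\<^sup>2)"
    by (simp only: s_cinner cinner_self_norm)
  then show ?thesis by (simp only: tendsto_of_real_iff)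
qed

lemma s_inc: "incseq (s x)"
  by (rule incseq_SucI) (simp add: s_def)

lemma s_le: "s x n \<le> (norm x)\<^sup>2"
  by (rule incseq_le[OF s_inc s_lim])

lemma s_diff: "m \<le> n \<Longrightarrow> (\<Sum>k\<in>{m..<n}. (norm (V k x))\<^sup>2) = s x n - s x m"
  unfolding s_def by (rule sum_lessThan_split[symmetric])

lemma T_est:
  assumes A: "bop A" and K: "\<And>x. norm (A x) \<le> K * norm x" "K \<ge> 0" and mn: "m \<le> n"
  shows "norm (T A n x - T A m x) \<le> K * sqrt (s x n - s x m)"
proof -
  have "s x m \<le> s x n" using s_inc mn by (simp add: incseq_def)
  then have sx: "0 \<le> sqrt (s x n - s x m)" by simp
  have mono: "K * (a * sqrt (s x n - s x m)) \<le> K * (b * sqrt (s x n - s x m))" if "a \<le> b" for a b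
    using K(2) sx that by (intro mult_left_mono mult_right_mono)
  define z where "z = T A n x - T A m x"
  have zsum: "z = (\<Sum>k\<in>{m..<n}. adj (V k) (A (V k x)))"
    unfolding z_def T_def by (rule sum_lessThan_split[OF mn])
  have "complex_of_real ((norm z)\<^sup>2) = cinner z z" by (simp only: cinner_self_norm)
  also have "\<dots> = cinner z (\<Sum>k\<in>{m..<n}. adj (V k) (A (V k x)))" by (simp only: zsum[symmetric])
  also have "\<dots> = (\<Sum>k\<in>{m..<n}. cinner (V k z) (A (V k x)))" by (simp only: cinner_sum_right adjV)
  finally have eq: "complex_of_real ((norm z)\<^sup>2) = (\<Sum>k\<in>{m..<n}. cinner (V k z) (A (V k x)))" .
  have "cmod (complex_of_real ((norm z)\<^sup>2)) = (norm z)\<^sup>2" unfolding norm_of_real by simp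
  then have "(norm z)\<^sup>2 = cmod (complex_of_real ((norm z)\<^sup>2))" by simp
  also have "\<dots> \<le> (\<Sum>k\<in>{m..<n}. cmod (cinner (V k z) (A (V k x))))" unfolding eq by (rule norm_sum)
  also have "\<dots> \<le> (\<Sum>k\<in>{m..<n}. norm (V k z) * (K * norm (V k x)))"
  proof (rule sum_mono)
    fix k
    have "cmod (cinner (V k z) (A (V k x))) \<le> norm (V k z) * norm (A (V k x))" by (rule cauchy_schwarz)
    also have "\<dots> \<le> norm (V k z) * (K * norm (V k x))" by (intro mult_left_mono K) simp
    finally show "cmod (cinner (V k z) (A (V k x))) \<le> norm (V k z) * (K * norm (V k x))" .
  qed
  also have "\<dots> = K * (\<Sum>k\<in>{m..<n}. \<bar>norm (V k z)\<bar> * \<bar>norm (V k x)\<bar>)"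
    by (simp add: sum_distrib_left algebra_simps)
  also have "\<dots> \<le> K * (L2_set (\<lambda>k. norm (V k z)) {m..<n} * L2_set (\<lambda>k. norm (V k x)) {m..<n})"
    by (intro mult_left_mono K L2_set_mult_ineq)
  also have "L2_set (\<lambda>k. norm (V k x)) {m..<n} = sqrt (s x n - s x m)"
    unfolding L2_set_def s_diff[OF mn] ..
  also have "L2_set (\<lambda>k. norm (V k z)) {m..<n} = sqrt (s z n - s z m)"
    unfolding L2_set_def s_diff[OF mn] ..
  also have "sqrt (s z n - s z m) \<le> norm z"
  proof -
    have "s z m \<ge> 0" unfolding s_def by (rule sum_nonneg) simp
    then have "s z n - s z m \<le> (norm z)\<^sup>2" using s_le[of z n] by linarith
    then have "sqrt (s z n - s z m) \<le> sqrt ((norm z)\<^sup>2)" by (rule real_sqrt_le_mono)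
    then show ?thesis by simp
  qed
  finally have *: "(norm z)\<^sup>2 \<le> K * (norm z * sqrt (s x n - s x m))"
    using mono by blast
  show ?thesis
  proof (cases "norm z = 0")
    case True
    then show ?thesis using K(2) sx by (simp add: z_def)
  next
    case False
    then have "norm z > 0" by simp
    from * have "norm z * norm z \<le> norm z * (K * sqrt (s x n - s x m))"
      by (simp add: power2_eq_square algebra_simps)
    then show ?thesis using \<open>norm z > 0\<close> by (simp add: z_def)
  qed
qed

lemma T_convergent:
  assumes A: "bop A"
  shows "convergent (\<lambda>n. T A n x)"
proof -
  obtain K where K: "\<And>x. norm (A x) \<le> K * norm x" "K \<ge> 0" using bop_bound[OF A] by blast
  have cs: "Cauchy (s x)" using s_lim by (rule LIMSEQ_imp_Cauchy)
  have "Cauchy (\<lambda>n. T A n x)"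
  proof (rule metric_CauchyI)
    fix e :: real assume e: "e > 0"
    define d where "d = (e / (K + 1))\<^sup>2"
    have d: "d > 0" using e K(2) by (simp add: d_def)
    obtain M where M: "\<And>m n. m \<ge> M \<Longrightarrow> n \<ge> M \<Longrightarrow> dist (s x m) (s x n) < d"
      using metric_CauchyD[OF cs d] by blast
    have main: "dist (T A m x) (T A n x) < e" if "m \<ge> M" "n \<ge> M" "m \<le> n" for m n
    proof -
      have "s x n - s x m < d" using M[OF that(1,2)] by (simp add: dist_real_def)
      then have "sqrt (s x n - s x m) < sqrt d" by (rule real_sqrt_less_mono)
      also have "sqrt d = e / (K + 1)" using e K(2) by (simp add: d_def)
      finally have "sqrt (s x n - s x m) < e / (K + 1)" .
      then have "K * sqrt (s x n - s x m) \<le> K * (e / (K + 1))"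
        using K(2) by (intro mult_left_mono) auto
      also have "\<dots> < e" using e K(2) by (simp add: field_simps)
      finally have "K * sqrt (s x n - s x m) < e" .
      moreover have "dist (T A m x) (T A n x) = norm (T A n x - T A m x)"
        by (simp add: dist_norm norm_minus_commute)
      ultimately show ?thesis using T_est[OF A K that(3), of x] by linarith
    qed
    show "\<exists>M. \<forall>m\<ge>M. \<forall>n\<ge>M. dist (T A m x) (T A n x) < e"
    proof (intro exI allI impI)
      fix m n assume "m \<ge> M" "n \<ge> M"
      then show "dist (T A m x) (T A n x) < e"
        using main[of m n] main[of n m] by (cases "m \<le> n") (auto simp: dist_commute)
    qed
  qed
  then show ?thesis by (rule Cauchy_convergent)
qed

lemma T_lim: "bop A \<Longrightarrow> (\<lambda>n. T A n x) \<longlonglongrightarrow> kraus_channel V A x"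
  using T_convergent[of A x] by (simp add: convergent_LIMSEQ_iff kraus_channel_def T_def)

end


context kraus begin

lemma T_cinner_right: "cinner y (T A n x) = (\<Sum>k<n. cinner (V k y) (A (V k x)))"
  unfolding T_def cinner_sum_right adjV ..

lemma T_cinner_left: "cinner (T A n x) y = (\<Sum>k<n. cinner (A (V k x)) (V k y))"
  unfolding T_def cinner_sum_left adjV' ..

lemma comm_from_fixed:
  assumes A: "bop A" and fix1: "kraus_channel V A = A"
    and fix2: "kraus_channel V (adj A \<circ> A) = adj A \<circ> A"
  shows "A \<circ> V k = V k \<circ> A"
proof
  fix x
  define d where "d j = A (V j x) - V j (A x)" for j
  define R where "R n = (\<Sum>j<n. (norm (d j))\<^sup>2)" for n
  have AA: "bop (adj A \<circ> A)" by (intro bop_comp bop_adj A)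
  define c where "c = cinner (A x) (A x)"
  have L1: "(\<lambda>n. cinner x (T (adj A \<circ> A) n x)) \<longlonglongrightarrow> c"
  proof -
    have "(\<lambda>n. cinner x (T (adj A \<circ> A) n x)) \<longlonglongrightarrow> cinner x (kraus_channel V (adj A \<circ> A) x)"
      by (rule bounded_linear.tendsto[OF bounded_linear_cinner_right T_lim[OF AA]])
    also have "cinner x (kraus_channel V (adj A \<circ> A) x) = c"
      unfolding fix2 c_def o_apply by (simp only: adj_prop[OF A])
    finally show ?thesis .
  qed
  have L2: "(\<lambda>n. cinner (T A n x) (A x)) \<longlonglongrightarrow> c"
  proof -
    have "(\<lambda>n. cinner (T A n x) (A x)) \<longlonglongrightarrow> cinner (kraus_channel V A x) (A x)"
      by (rule bounded_linear.tendsto[OF bounded_linear_cinner_left T_lim[OF A]])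
    then show ?thesis unfolding fix1 c_def .
  qed
  have L3: "(\<lambda>n. cinner (A x) (T A n x)) \<longlonglongrightarrow> c"
  proof -
    have "(\<lambda>n. cinner (A x) (T A n x)) \<longlonglongrightarrow> cinner (A x) (kraus_channel V A x)"
      by (rule bounded_linear.tendsto[OF bounded_linear_cinner_right T_lim[OF A]])
    then show ?thesis unfolding fix1 c_def .
  qed
  have L4: "(\<lambda>n. cinner (A x) (\<Sum>k<n. adj (V k) (V k (A x)))) \<longlonglongrightarrow> c"
    unfolding c_def by (rule bounded_linear.tendsto[OF bounded_linear_cinner_right trace])
  have eq: "complex_of_real (R n) = cinner x (T (adj A \<circ> A) n x) - cinner (T A n x) (A x)
      - cinner (A x) (T A n x) + cinner (A x) (\<Sum>k<n. adj (V k) (V k (A x)))" for n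
  proof -
    have "complex_of_real (R n) = (\<Sum>j<n. cinner (d j) (d j))"
      unfolding R_def of_real_sum by (simp only: cinner_self_norm)
    also have "\<dots> = (\<Sum>j<n. cinner (A (V j x)) (A (V j x)) - cinner (A (V j x)) (V j (A x))
        - cinner (V j (A x)) (A (V j x)) + cinner (V j (A x)) (V j (A x)))"
      unfolding d_def by (intro sum.cong refl) (simp add: cinner_diff_left cinner_diff_right algebra_simps)
    also have "\<dots> = (\<Sum>j<n. cinner (A (V j x)) (A (V j x))) - (\<Sum>j<n. cinner (A (V j x)) (V j (A x)))
        - (\<Sum>j<n. cinner (V j (A x)) (A (V j x))) + (\<Sum>j<n. cinner (V j (A x)) (V j (A x)))"
      by (simp only: sum.distrib sum_subtractf)
    also have "(\<Sum>j<n. cinner (A (V j x)) (A (V j x))) = cinner x (T (adj A \<circ> A) n x)"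
      unfolding T_cinner_right o_apply by (simp only: adj_prop[OF A])
    also have "(\<Sum>j<n. cinner (A (V j x)) (V j (A x))) = cinner (T A n x) (A x)"
      unfolding T_cinner_left ..
    also have "(\<Sum>j<n. cinner (V j (A x)) (A (V j x))) = cinner (A x) (T A n x)"
      unfolding T_cinner_right ..
    also have "(\<Sum>j<n. cinner (V j (A x)) (V j (A x))) = cinner (A x) (\<Sum>k<n. adj (V k) (V k (A x)))"
      unfolding cinner_sum_right adjV ..
    finally show ?thesis .
  qed
  have "(\<lambda>n. complex_of_real (R n)) \<longlonglongrightarrow> c - c - c + c"
    unfolding eq by (intro tendsto_add tendsto_diff L1 L2 L3 L4)
  then have "(\<lambda>n. complex_of_real (R n)) \<longlonglongrightarrow> complex_of_real 0" by simp
  then have Rlim: "R \<longlonglongrightarrow> 0" by (simp only: tendsto_of_real_iff)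
  have Rinc: "incseq R" by (rule incseq_SucI) (simp add: R_def)
  have "(norm (d k))\<^sup>2 \<le> R (Suc k)"
    unfolding R_def by (rule member_le_sum) auto
  also have "R (Suc k) \<le> 0" by (rule incseq_le[OF Rinc Rlim])
  finally have "d k = 0" by simp
  then show "(A \<circ> V k) x = (V k \<circ> A) x" by (simp add: d_def)
qed

lemma phi_adj:
  assumes A: "bop A" and fix1: "kraus_channel V A = A"
  shows "kraus_channel V (adj A) = adj A"
proof
  fix x
  show "kraus_channel V (adj A) x = adj A x"
  proof (rule cinner_ext)
    fix y
    have l1: "(\<lambda>n. cinner y (T (adj A) n x)) \<longlonglongrightarrow> cinner y (kraus_channel V (adj A) x)"
      by (rule bounded_linear.tendsto[OF bounded_linear_cinner_right T_lim[OF bop_adj[OF A]]])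
    have eqn: "cinner y (T (adj A) n x) = cnj (cinner x (T A n y))" for n
    proof -
      have "cinner y (T (adj A) n x) = (\<Sum>k<n. cinner (A (V k y)) (V k x))"
        unfolding T_cinner_right by (simp only: adj_prop[OF A])
      also have "\<dots> = (\<Sum>k<n. cnj (cinner (V k x) (A (V k y))))"
        by (rule sum.cong) (simp_all only: cinner_commute[of "A (V _ y)"])
      also have "\<dots> = cnj (cinner x (T A n y))"
        unfolding T_cinner_right cnj_sum ..
      finally show ?thesis .
    qed
    have "(\<lambda>n. cnj (cinner x (T A n y))) \<longlonglongrightarrow> cnj (cinner x (kraus_channel V A y))"
      by (intro tendsto_cnj bounded_linear.tendsto[OF bounded_linear_cinner_right T_lim[OF A]])
    also have "cnj (cinner x (kraus_channel V A y)) = cinner y (adj A x)"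
      unfolding fix1 by (metis adj_prop[OF A] cinner_commute)
    finally have l2: "(\<lambda>n. cinner y (T (adj A) n x)) \<longlonglongrightarrow> cinner y (adj A x)"
      unfolding eqn .
    show "cinner y (kraus_channel V (adj A) x) = cinner y (adj A x)"
      by (rule LIMSEQ_unique[OF l1 l2])
  qed
qed

end


context kraus begin

abbreviation "SV \<equiv> range V \<union> adj ` range V"

lemma S_partner:
  assumes "B \<in> SV"
  shows "bop B \<and> (\<exists>B'\<in>SV. \<forall>u v. cinner u (B v) = cinner (B' u) v)"
  using assms
proof
  assume "B \<in> range V"
  then obtain k where k: "B = V k" by blast
  have "\<forall>u v. cinner u (B v) = cinner (adj (V k) u) v" unfolding k adjV' by simp
  then show ?thesis using Vbop[of k] k by blast
next
  assume "B \<in> adj ` range V"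
  then obtain k where k: "B = adj (V k)" by blast
  have "\<forall>u v. cinner u (B v) = cinner (V k u) v" unfolding k adjV by simp
  then show ?thesis using bop_adj[OF Vbop[of k]] k by blast
qed

lemma fixed_sub_comm:
  assumes F: "A \<in> fixed_points (kraus_channel V)" and M: "A \<in> mult_domain (kraus_channel V)"
  shows "A \<in> commutant SV"
proof -
  have A: "bop A" and f1: "kraus_channel V A = A" using F by (auto simp: fixed_points_def BH_iff)
  have f2: "kraus_channel V (adj A \<circ> A) = adj A \<circ> A" and f3: "kraus_channel V (A \<circ> adj A) = A \<circ> adj A"
    using M f1 by (auto simp: mult_domain_def)
  have c1: "A \<circ> V k = V k \<circ> A" for k by (rule comm_from_fixed[OF A f1 f2])
  have c2: "adj A \<circ> V k = V k \<circ> adj A" for k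
  proof (rule comm_from_fixed[OF bop_adj[OF A] phi_adj[OF A f1]])
    show "kraus_channel V (adj (adj A) \<circ> adj A) = adj (adj A) \<circ> adj A"
      unfolding adj_adj[OF A] by (rule f3)
  qed
  have c3: "A \<circ> adj (V k) = adj (V k) \<circ> A" for k
  proof
    fix z
    show "(A \<circ> adj (V k)) z = (adj (V k) \<circ> A) z"
    proof (rule cinner_ext)
      fix w
      have "cinner w (A (adj (V k) z)) = cinner (adj A w) (adj (V k) z)" by (simp only: adj_prop'[OF A])
      also have "\<dots> = cinner (V k (adj A w)) z" by (simp only: adjV)
      also have "\<dots> = cinner (adj A (V k w)) z" using fun_cong[OF c2[of k], of w] by simp
      also have "\<dots> = cinner (V k w) (A z)" by (simp only: adj_prop'[OF A])
      also have "\<dots> = cinner w (adj (V k) (A z))" by (simp only: adjV)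
      finally show "cinner w ((A \<circ> adj (V k)) z) = cinner w ((adj (V k) \<circ> A) z)" by simp
    qed
  qed
  show ?thesis unfolding commutant_def using A c1 c3 by (auto simp: BH_iff)
qed

lemma comm_sub_fixed:
  assumes C: "A \<in> commutant SV"
  shows "A \<in> fixed_points (kraus_channel V)"
proof -
  have A: "bop A" and c: "\<And>k. A \<circ> V k = V k \<circ> A" using C by (auto simp: commutant_def BH_iff)
  have "kraus_channel V A x = A x" for x
  proof -
    have "T A n x = (\<Sum>k<n. adj (V k) (V k (A x)))" for n
      unfolding T_def using c by (metis comp_apply)
    then have "(\<lambda>n. T A n x) \<longlonglongrightarrow> A x" using trace[of "A x"] by simp
    then show ?thesis using T_lim[OF A, of x] LIMSEQ_unique by blast
  qed
  then show ?thesis using A by (auto simp: fixed_points_def BH_iff)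
qed

lemma comm_vN: "von_neumann_algebra (commutant SV)"
proof -
  let ?C = "commutant SV"
  have memC: "A \<in> ?C \<longleftrightarrow> bop A \<and> (\<forall>D\<in>SV. \<forall>x. A (D x) = D (A x))" for A
    by (auto simp: commutant_def BH_iff fun_eq_iff)
  have sub: "?C \<subseteq> BH" by (auto simp: commutant_def)
  have idC: "id \<in> ?C" unfolding memC by (simp add: bop_id)
  have addC: "op_add A B \<in> ?C" if "A \<in> ?C" "B \<in> ?C" for A B
  proof -
    have A: "bop A" and B: "bop B" and cA: "\<forall>D\<in>SV. \<forall>x. A (D x) = D (A x)"
      and cB: "\<forall>D\<in>SV. \<forall>x. B (D x) = D (B x)" using that unfolding memC by auto
    have "bop (op_add A B)" by (rule bop_op_add[OF A B])
    moreover have "\<forall>D\<in>SV. \<forall>x. op_add A B (D x) = D (op_add A B x)"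
      using cA cB S_partner by (auto simp: op_add_def bop_add)
    ultimately show ?thesis by (simp only: memC)
  qed
  have compC: "A \<circ> B \<in> ?C" if "A \<in> ?C" "B \<in> ?C" for A B
    using that unfolding memC by (auto simp: bop_comp)
  have scaleC': "op_scale c A \<in> ?C" if "A \<in> ?C" for c A
  proof -
    have A: "bop A" and cA: "\<forall>D\<in>SV. \<forall>x. A (D x) = D (A x)" using that unfolding memC by auto
    have "bop (op_scale c A)" by (rule bop_op_scale[OF A])
    moreover have "\<forall>D\<in>SV. \<forall>x. op_scale c A (D x) = D (op_scale c A x)"
      using cA S_partner by (auto simp: op_scale_def bop_scaleC)
    ultimately show ?thesis by (simp only: memC)
  qed
  have adjC: "adj A \<in> ?C" if "A \<in> ?C" for A
  proof -
    have A: "bop A" and cA: "\<And>D x. D \<in> SV \<Longrightarrow> A (D x) = D (A x)" using that unfolding memC by auto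
    have "adj A (D z) = D (adj A z)" if D: "D \<in> SV" for D z
    proof -
      obtain D' where D': "D' \<in> SV" "\<And>u v. cinner u (D v) = cinner (D' u) v" using S_partner[OF D] by blast
      show ?thesis
      proof (rule cinner_ext)
        fix w
        have "cinner w (adj A (D z)) = cinner (A w) (D z)" by (simp only: adj_prop[OF A])
        also have "\<dots> = cinner (D' (A w)) z" by (rule D'(2))
        also have "\<dots> = cinner (A (D' w)) z" by (simp only: cA[OF D'(1)])
        also have "\<dots> = cinner (D' w) (adj A z)" by (rule adj_prop[OF A])
        also have "\<dots> = cinner w (D (adj A z))" by (simp only: D'(2))
        finally show "cinner w (adj A (D z)) = cinner w (D (adj A z))" .
      qed
    qed
    then show ?thesis unfolding memC using bop_adj[OF A] by auto
  qed
  have wotC: "wot_closed ?C"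
    unfolding wot_closed_def
  proof (intro ballI impI)
    fix A assume ABH: "A \<in> BH"
      and appr: "\<forall>(xs :: ('a \<times> 'a) list) (e::real). e > 0 \<longrightarrow>
        (\<exists>B\<in>?C. \<forall>(x, y)\<in>set xs. cmod (cinner y (A x) - cinner y (B x)) < e)"
    have "A (D z) = D (A z)" if D: "D \<in> SV" for D z
    proof -
      obtain D' where D': "D' \<in> SV" "\<And>u v. cinner u (D v) = cinner (D' u) v" using S_partner[OF D] by blast
      show ?thesis
      proof (rule cinner_ext)
        fix w
        define \<delta> where "\<delta> = cinner w (A (D z)) - cinner w (D (A z))"
        have small: "cmod \<delta> < e" if e: "e > 0" for e
        proof -
          obtain B where B: "B \<in> ?C"
            and hB: "\<forall>(x, y)\<in>set [(D z, w), (z, D' w)]. cmod (cinner y (A x) - cinner y (B x)) < e / 2"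
            using appr[rule_format, of "e / 2" "[(D z, w), (z, D' w)]"] e by auto
          have h1: "cmod (cinner w (A (D z)) - cinner w (B (D z))) < e / 2" using hB by auto
          have h2: "cmod (cinner (D' w) (A z) - cinner (D' w) (B z)) < e / 2" using hB by auto
          have "B (D z) = D (B z)" using B D unfolding memC by auto
          then have e1: "cinner w (B (D z)) = cinner (D' w) (B z)" by (simp only: D'(2))
          have e2: "cinner w (D (A z)) = cinner (D' w) (A z)" by (rule D'(2))
          have "\<delta> = (cinner w (A (D z)) - cinner w (B (D z))) - (cinner (D' w) (A z) - cinner (D' w) (B z))"
            unfolding \<delta>_def e1 e2 by simp
          then have "cmod \<delta> \<le> cmod (cinner w (A (D z)) - cinner w (B (D z))) + cmod (cinner (D' w) (A z) - cinner (D' w) (B z))"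
            by (simp add: norm_triangle_ineq4)
          then show ?thesis using h1 h2 by linarith
        qed
        have "\<delta> = 0"
        proof (rule ccontr)
          assume "\<delta> \<noteq> 0"
          then have "cmod \<delta> > 0" by simp
          from small[OF this] show False by simp
        qed
        then show "cinner w (A (D z)) = cinner w (D (A z))" by (simp add: \<delta>_def)
      qed
    qed
    then show "A \<in> ?C" unfolding memC using ABH by (auto simp: BH_iff)
  qed
  have P1: "\<forall>A\<in>?C. \<forall>B\<in>?C. op_add A B \<in> ?C \<and> A \<circ> B \<in> ?C" using addC compC by blast
  have P2: "\<forall>c. \<forall>A\<in>?C. op_scale c A \<in> ?C" using scaleC' by blast
  have P3: "\<forall>A\<in>?C. adj A \<in> ?C" using adjC by blast
  show ?thesis unfolding von_neumann_algebra_def using sub idC P1 P2 P3 wotC by (intro conjI)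
qed

lemma fixed_eq_comm:
  assumes "fixed_points (kraus_channel V) \<subseteq> mult_domain (kraus_channel V)"
  shows "fixed_points (kraus_channel V) = commutant SV"
  using assms fixed_sub_comm comm_sub_fixed by blast

end

lemma funpow_fix: "Phi A = A \<Longrightarrow> (Phi ^^ n) A = A"
  by (induction n) auto

lemma vN_dec:
  assumes "von_neumann_algebra (fixed_points Phi)"
  shows "fixed_points Phi \<subseteq> decoherence_free Phi"
proof
  fix A assume AF: "A \<in> fixed_points Phi"
  have ABH: "A \<in> BH" and fA: "Phi A = A" using AF by (auto simp: fixed_points_def)
  have "adj A \<in> fixed_points Phi" using assms AF by (auto simp: von_neumann_algebra_def)
  then have F1: "adj A \<circ> A \<in> fixed_points Phi" and F2: "A \<circ> adj A \<in> fixed_points Phi"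
    using assms AF by (auto simp: von_neumann_algebra_def)
  have f1: "Phi (adj A \<circ> A) = adj A \<circ> A" and f2: "Phi (A \<circ> adj A) = A \<circ> adj A"
    using F1 F2 by (auto simp: fixed_points_def)
  have "A \<in> mult_domain (Phi ^^ n)" for n
    unfolding mult_domain_def using ABH funpow_fix[where Phi=Phi and A=A, OF fA] funpow_fix[where Phi=Phi and A="adj A \<circ> A", OF f1]
      funpow_fix[where Phi=Phi and A="A \<circ> adj A", OF f2]
    by simp
  then show "A \<in> decoherence_free Phi" by (simp add: decoherence_free_def)
qed

lemma dec_sub_mult: "decoherence_free Phi \<subseteq> mult_domain Phi"
proof -
  have "decoherence_free Phi \<subseteq> mult_domain (Phi ^^ 1)"
    unfolding decoherence_free_def by auto
  then show ?thesis by simp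
qed

theorem mainTheorem1:
  fixes V :: "nat \<Rightarrow> ('a::chilbert_space \<Rightarrow> 'a)"
  assumes sep: "separable_space TYPE('a)"
    and bounded: "\<And>k. V k \<in> BH"
    and trace_pres: "\<And>x. (\<lambda>n. \<Sum>k<n. adj (V k) (V k x)) \<longlonglongrightarrow> x"
  shows "(von_neumann_algebra (fixed_points (kraus_channel V))
            \<longleftrightarrow> fixed_points (kraus_channel V) \<subseteq> decoherence_free (kraus_channel V))
       \<and> (von_neumann_algebra (fixed_points (kraus_channel V))
            \<longrightarrow> fixed_points (kraus_channel V) = commutant (range V \<union> adj ` range V))"
proof -
  interpret kraus V
    by unfold_locales (use bounded trace_pres in \<open>auto simp: BH_iff\<close>)
  let ?F = "fixed_points (kraus_channel V)"
  have FC: "?F = commutant SV" if "?F \<subseteq> decoherence_free (kraus_channel V)"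
    using fixed_eq_comm that dec_sub_mult by blast
  show ?thesis
  proof (intro conjI iffI impI)
    assume "von_neumann_algebra ?F" then show "?F \<subseteq> decoherence_free (kraus_channel V)" by (rule vN_dec)
  next
    assume "?F \<subseteq> decoherence_free (kraus_channel V)"
    then show "von_neumann_algebra ?F" using FC comm_vN by simp
  next
    assume "von_neumann_algebra ?F"
    then show "?F = commutant SV" using FC vN_dec by blast
  qed
qed



end
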